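(* Let $U\subseteq\mathbb R^2$ be a convex region and let $b$ be a line segment disjoint from $U$. Let $\varepsilon\ge 0$ and suppose the set $A:=\{\alpha\in[0,2\pi) : U(\alpha)\cap b(\alpha)\neq\emptyset\}$ has Lebesgue measure at most $2\pi-4\varepsilon$. Then $$\int_0^{2\pi}\lvert b(\alpha)\cap U(\alpha)\rvert\,\mathrm d\alpha \le 4\lvert b\rvert\cos\varepsilon .$$
   Context: For a set $X\subseteq\mathbb R^2$ and $\alpha\in[0,2\pi)$, $X(\alpha)=\{x\cos\alpha+y\sin\alpha:(x,y)\in X\}\subseteq\mathbb R$ is the projection of $X$ onto the line through the origin at angle $\alpha$; $\lvert\cdot\rvert$ on subsets of $\mathbb R$ is Lebesgue measure, and $\lvert b\rvert$ is the length of the segment $b$. *)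

theory Defs
  imports "HOL-Analysis.Analysis"
begin

definition proj :: "(real \<times> real) set \<Rightarrow> real \<Rightarrow> real set" where
  "proj X \<alpha> = (\<lambda>(x, y). x * cos \<alpha> + y * sin \<alpha>) ` X"

end

theory Submission
  imports Defs
begin


definition pr :: "real \<times> real \<Rightarrow> real \<Rightarrow> real" where
  "pr z \<alpha> = fst z * cos \<alpha> + snd z * sin \<alpha>"

lemma proj_eq: "proj X \<alpha> = (\<lambda>z. pr z \<alpha>) ` X"
  unfolding proj_def pr_def by (auto simp: case_prod_beta)

lemma continuous_pr[continuous_intros]:
  fixes f :: "'a::t2_space \<Rightarrow> real"
  assumes "continuous_on S f" shows "continuous_on S (\<lambda>x. pr z (f x))"
  unfolding pr_def using assms by (intro continuous_intros)

definition Kset :: "real \<times> real \<Rightarrow> real \<times> real \<Rightarrow> (real \<times> real) set" where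
  "Kset p q = {z. min (pr p (fst z)) (pr q (fst z)) \<le> snd z \<and> snd z \<le> max (pr p (fst z)) (pr q (fst z))}"

definition Oset :: "(real \<times> real) set \<Rightarrow> (real \<times> real) set" where
  "Oset U = {z. \<exists>x\<in>U. \<exists>y\<in>U. pr x (fst z) < snd z \<and> snd z < pr y (fst z)}"

lemma closed_Kset: "closed (Kset p q)"
  unfolding Kset_def
  by (intro closed_Collect_conj closed_Collect_le continuous_intros continuous_on_min continuous_on_max)

lemma open_Oset: "open (Oset U)"
proof -
  have "Oset U = (\<Union>x\<in>U. \<Union>y\<in>U. {z. pr x (fst z) < snd z} \<inter> {z. snd z < pr y (fst z)})"
    unfolding Oset_def by auto
  also have "open \<dots>"
    by (intro open_UN ballI open_Int open_Collect_less continuous_intros)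
  finally show ?thesis .
qed

lemma S_sets: "Kset p q \<inter> Oset U \<in> sets (lborel \<Otimes>\<^sub>M lborel)"
  unfolding lborel_prod
  using closed_Kset open_Oset by (auto intro: borel_closed borel_open)

lemma linear_pr: "linear (\<lambda>z. pr z \<alpha>)"
  unfolding pr_def by (rule linearI) (auto simp: algebra_simps)

lemma proj_segment: "proj (closed_segment p q) \<alpha> = {min (pr p \<alpha>) (pr q \<alpha>) .. max (pr p \<alpha>) (pr q \<alpha>)}"
  unfolding proj_eq closed_segment_linear_image[OF linear_pr, symmetric]
  by (simp add: closed_segment_eq_real_ivl)

lemma subsingleton_finite: "(\<And>a b. a \<in> X \<Longrightarrow> b \<in> X \<Longrightarrow> a = b) \<Longrightarrow> finite X"
proof (cases "X = {}")
  case False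
  then obtain x where "x \<in> X" by auto
  moreover assume "\<And>a b. a \<in> X \<Longrightarrow> b \<in> X \<Longrightarrow> a = b"
  ultimately have "X \<subseteq> {x}" by auto
  then show ?thesis using finite_subset by blast
qed simp

lemma convex_between:
  assumes U: "convex U" and x: "x \<in> U" and y: "y \<in> U" and lt: "pr x \<alpha> < t" "t < pr y \<alpha>"
  shows "t \<in> proj U \<alpha>"
proof -
  define D where "D = pr y \<alpha> - pr x \<alpha>"
  have D: "D > 0" using lt unfolding D_def by auto
  define \<mu> where "\<mu> = (t - pr x \<alpha>) / D"
  have m: "0 \<le> \<mu>" "\<mu> \<le> 1" using lt D unfolding \<mu>_def D_def by (auto simp: field_simps)
  have "(1 - \<mu>) *\<^sub>R x + \<mu> *\<^sub>R y \<in> U"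
    using U x y m by (simp add: convex_alt)
  moreover have "pr ((1 - \<mu>) *\<^sub>R x + \<mu> *\<^sub>R y) \<alpha> = (1 - \<mu>) * pr x \<alpha> + \<mu> * pr y \<alpha>"
    unfolding pr_def by (simp add: algebra_simps)
  moreover have "(1 - \<mu>) * pr x \<alpha> + \<mu> * pr y \<alpha> = t"
  proof -
    have h: "\<mu> * D = t - pr x \<alpha>" unfolding \<mu>_def using D by simp
    have "(1 - \<mu>) * pr x \<alpha> + \<mu> * pr y \<alpha> = pr x \<alpha> + \<mu> * D"
      unfolding D_def by (simp add: algebra_simps)
    then show ?thesis using h by simp
  qed
  ultimately show ?thesis unfolding proj_eq by (metis image_eqI)
qed

lemma slice_eq:
  assumes U: "convex U"
  shows "measure lebesgue (proj (closed_segment p q) \<alpha> \<inter> proj U \<alpha>) = measure lborel (Pair \<alpha> -` (Kset p q \<inter> Oset U))"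
proof -
  define K where "K = {min (pr p \<alpha>) (pr q \<alpha>) .. max (pr p \<alpha>) (pr q \<alpha>)}"
  define Ob where "Ob = {t. \<exists>x\<in>U. \<exists>y\<in>U. pr x \<alpha> < t \<and> t < pr y \<alpha>}"
  define P where "P = proj U \<alpha>"
  have sl: "Pair \<alpha> -` (Kset p q \<inter> Oset U) = K \<inter> Ob"
    unfolding K_def Ob_def Kset_def Oset_def by auto
  have OP: "Ob \<subseteq> P" unfolding Ob_def P_def using convex_between[OF U] by blast
  define F where "F = (K \<inter> P) - Ob"
  have F1: "F \<subseteq> {t\<in>P. \<forall>s\<in>P. t \<le> s} \<union> {t\<in>P. \<forall>s\<in>P. s \<le> t}"
  proof
    fix t assume "t \<in> F"
    then have t: "t \<in> P" "t \<notin> Ob" unfolding F_def by auto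
    show "t \<in> {t\<in>P. \<forall>s\<in>P. t \<le> s} \<union> {t\<in>P. \<forall>s\<in>P. s \<le> t}"
    proof (rule ccontr)
      assume "\<not> ?thesis"
      then obtain s1 s2 where "s1 \<in> P" "s1 < t" "s2 \<in> P" "t < s2" using t by (auto simp: not_le)
      then show False using t unfolding P_def Ob_def proj_eq by auto
    qed
  qed
  have "finite {t\<in>P. \<forall>s\<in>P. t \<le> s}" by (rule subsingleton_finite) (auto intro: order.antisym)
  moreover have "finite {t\<in>P. \<forall>s\<in>P. s \<le> t}" by (rule subsingleton_finite) (auto intro: order.antisym)
  ultimately have finF: "finite F" using F1 finite_subset by blast
  have Oopen: "open Ob"
  proof -
    have "Ob = (\<Union>x\<in>U. \<Union>y\<in>U. {pr x \<alpha> <..< pr y \<alpha>})" unfolding Ob_def by auto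
    then show ?thesis by (auto intro!: open_UN)
  qed
  have KO: "K \<inter> Ob \<in> sets borel" unfolding K_def using Oopen by (auto intro!: borel_open)
  have Fb: "F \<in> null_sets lborel" using finF by (rule finite_imp_null_set_lborel)
  have eq: "proj (closed_segment p q) \<alpha> \<inter> proj U \<alpha> = (K \<inter> Ob) \<union> F"
    unfolding proj_segment F_def using OP unfolding K_def P_def by auto
  have "(K \<inter> Ob) \<union> F \<in> sets lborel" using KO Fb by auto
  then have "measure lebesgue ((K \<inter> Ob) \<union> F) = measure lborel ((K \<inter> Ob) \<union> F)"
    by simp
  also have "\<dots> = measure lborel (K \<inter> Ob)"
    using KO Fb by (intro measure_Un_null_set) auto
  finally show ?thesis unfolding eq sl .
qed

lemma f_borel:
  assumes U: "convex U"
  shows "(\<lambda>\<alpha>. measure lebesgue (proj (closed_segment p q) \<alpha> \<inter> proj U \<alpha>)) \<in> borel_measurable lborel"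
proof -
  have "(\<lambda>\<alpha>. emeasure lborel (Pair \<alpha> -` (Kset p q \<inter> Oset U))) \<in> borel_measurable lborel"
    by (rule lborel.measurable_emeasure_Pair[OF S_sets])
  then have "(\<lambda>\<alpha>. measure lborel (Pair \<alpha> -` (Kset p q \<inter> Oset U))) \<in> borel_measurable lborel"
    unfolding measure_def by measurable
  then show ?thesis by (simp add: slice_eq[OF U])
qed

lemma f_bound:
  assumes U: "convex U"
  shows "measure lebesgue (proj (closed_segment p q) \<alpha> \<inter> proj U \<alpha>) \<le> \<bar>pr p \<alpha> - pr q \<alpha>\<bar>"
proof -
  let ?K = "{min (pr p \<alpha>) (pr q \<alpha>) .. max (pr p \<alpha>) (pr q \<alpha>)}"
  have KO: "Pair \<alpha> -` (Kset p q \<inter> Oset U) \<subseteq> ?K" unfolding Kset_def by auto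
  have ms: "Pair \<alpha> -` (Kset p q \<inter> Oset U) \<in> sets lborel"
    by (rule sets_Pair1[OF S_sets])
  have "measure lborel (Pair \<alpha> -` (Kset p q \<inter> Oset U)) \<le> measure lborel ?K"
    by (rule measure_mono_fmeasurable[OF KO ms]) (auto simp: fmeasurable_def)
  also have "\<dots> = \<bar>pr p \<alpha> - pr q \<alpha>\<bar>" by (simp add: measure_def)
  finally show ?thesis by (simp add: slice_eq[OF U])
qed

lemma f_nonneg: "0 \<le> measure lebesgue (proj (closed_segment p q) \<alpha> \<inter> proj U \<alpha>)"
  by simp

definition rr :: "real \<times> real \<Rightarrow> real \<Rightarrow> real" where
  "rr z \<alpha> = - fst z * sin \<alpha> + snd z * cos \<alpha>"

lemma pr_rot: "pr c (x + d) = pr c x * cos d + rr c x * sin d"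
  unfolding pr_def rr_def by (simp add: sin_add cos_add algebra_simps)

lemma rr_rot: "rr c (x + d) = rr c x * cos d - pr c x * sin d"
  unfolding pr_def rr_def by (simp add: sin_add cos_add algebra_simps)

lemma pr_lin: "pr (a *\<^sub>R c + b *\<^sub>R d) z = a * pr c z + b * pr d z"
  unfolding pr_def by (simp add: algebra_simps)

lemma rr_lin: "rr (a *\<^sub>R c + b *\<^sub>R d) z = a * rr c z + b * rr d z"
  unfolding rr_def by (simp add: algebra_simps)

lemma pr_rr_zero: "pr c x = 0 \<Longrightarrow> rr c x = 0 \<Longrightarrow> c = 0"
proof -
  assume a: "pr c x = 0" "rr c x = 0"
  have "fst c = cos x * pr c x - sin x * rr c x"
    unfolding pr_def rr_def by (simp add: algebra_simps) (metis mult.commute sin_cos_squared_add2 mult_1 distrib_left power2_eq_square)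
  moreover have "snd c = sin x * pr c x + cos x * rr c x"
    unfolding pr_def rr_def by (simp add: algebra_simps) (metis mult.commute sin_cos_squared_add2 mult_1 distrib_left power2_eq_square)
  ultimately show "c = 0" using a by (simp add: prod_eq_iff)
qed

lemma sign_interval:
  assumes U: "convex U" and V: "convex V" and \<sigma>: "\<sigma> * \<sigma> = (1::real)" and ab: "b - a \<le> pi/2"
  shows "is_interval {\<alpha> \<in> {a..b}. \<exists>u\<in>U. \<exists>v\<in>V. pr (u - v) \<alpha> = 0 \<and> \<sigma> * rr (u - v) \<alpha> > 0}"
  unfolding is_interval_1
proof (intro ballI allI impI)
  fix x y z
  assume xS: "x \<in> {\<alpha> \<in> {a..b}. \<exists>u\<in>U. \<exists>v\<in>V. pr (u - v) \<alpha> = 0 \<and> \<sigma> * rr (u - v) \<alpha> > 0}"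
    and yS: "y \<in> {\<alpha> \<in> {a..b}. \<exists>u\<in>U. \<exists>v\<in>V. pr (u - v) \<alpha> = 0 \<and> \<sigma> * rr (u - v) \<alpha> > 0}"
    and xzy: "x \<le> z \<and> z \<le> y"
  show "z \<in> {\<alpha> \<in> {a..b}. \<exists>u\<in>U. \<exists>v\<in>V. pr (u - v) \<alpha> = 0 \<and> \<sigma> * rr (u - v) \<alpha> > 0}"
  proof (cases "z = x \<or> z = y")
    case True then show ?thesis using xS yS by auto
  next
    case False
    with xzy have lt: "x < z" "z < y" by auto
    obtain u1 v1 where uv1: "u1 \<in> U" "v1 \<in> V" "pr (u1 - v1) x = 0" "\<sigma> * rr (u1 - v1) x > 0"
      using xS by auto
    obtain u2 v2 where uv2: "u2 \<in> U" "v2 \<in> V" "pr (u2 - v2) y = 0" "\<sigma> * rr (u2 - v2) y > 0"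
      using yS by auto
    have zab: "z \<in> {a..b}" using xS yS lt by auto
    have yx: "y - x \<le> pi/2" using xS yS ab by auto
    define c1 where "c1 = u1 - v1"
    define c2 where "c2 = u2 - v2"
    define t1 where "t1 = \<sigma> * rr c1 x"
    define t2 where "t2 = \<sigma> * rr c2 y"
    have t: "t1 > 0" "t2 > 0" using uv1 uv2 unfolding t1_def t2_def c1_def c2_def by auto
    have \<sigma>2: "\<And>w. \<sigma> * (\<sigma> * w) = w" using \<sigma> by (metis mult.assoc mult_1)
    have p1: "pr c1 z = \<sigma> * t1 * sin (z - x)" "rr c1 z = \<sigma> * t1 * cos (z - x)"
      using pr_rot[of c1 x "z - x"] rr_rot[of c1 x "z - x"] uv1(3) \<sigma>
      unfolding t1_def c1_def[symmetric] by (simp_all add: algebra_simps \<sigma>2)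
    have p2: "pr c2 z = - (\<sigma> * t2 * sin (y - z))" "rr c2 z = \<sigma> * t2 * cos (y - z)"
      using pr_rot[of c2 y "z - y"] rr_rot[of c2 y "z - y"] uv2(3) \<sigma>
      unfolding t2_def c2_def[symmetric] by (simp_all add: algebra_simps sin_diff cos_diff \<sigma>2)
    have s1: "sin (z - x) > 0" using lt yx by (intro sin_gt_zero) auto
    have s2: "sin (y - z) > 0" using lt yx by (intro sin_gt_zero) auto
    have co1: "cos (z - x) > 0" using lt yx by (intro cos_gt_zero) auto
    have co2: "cos (y - z) > 0" using lt yx by (intro cos_gt_zero) auto
    define A where "A = t1 * sin (z - x)"
    define B where "B = t2 * sin (y - z)"
    have AB: "A > 0" "B > 0" using t s1 s2 unfolding A_def B_def by auto
    define \<mu> where "\<mu> = A / (A + B)"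
    have m: "0 < \<mu>" "\<mu> < 1" using AB unfolding \<mu>_def by (auto simp: field_simps)
    define u where "u = (1 - \<mu>) *\<^sub>R u1 + \<mu> *\<^sub>R u2"
    define v where "v = (1 - \<mu>) *\<^sub>R v1 + \<mu> *\<^sub>R v2"
    have uU: "u \<in> U" using U uv1 uv2 m unfolding u_def by (simp add: convex_alt)
    have vV: "v \<in> V" using V uv1 uv2 m unfolding v_def by (simp add: convex_alt)
    have uv: "u - v = (1 - \<mu>) *\<^sub>R c1 + \<mu> *\<^sub>R c2"
      unfolding u_def v_def c1_def c2_def by (simp add: algebra_simps)
    have "pr (u - v) z = \<sigma> * ((1 - \<mu>) * A - \<mu> * B)"
      unfolding uv pr_lin p1 p2 A_def B_def by (simp add: algebra_simps)
    also have "(1 - \<mu>) * A - \<mu> * B = 0"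
      using AB unfolding \<mu>_def by (simp add: field_simps)
    finally have pz: "pr (u - v) z = 0" by simp
    have "\<sigma> * rr (u - v) z = (\<sigma> * \<sigma>) * ((1 - \<mu>) * t1 * cos (z - x) + \<mu> * t2 * cos (y - z))"
      unfolding uv rr_lin p1 p2 by (simp add: algebra_simps)
    also have "\<dots> > 0" using \<sigma> m t co1 co2 by (simp add: add_pos_pos)
    finally show ?thesis using pz uU vV zab by auto
  qed
qed

lemma pr_diff: "pr (u - v) \<alpha> = pr u \<alpha> - pr v \<alpha>"
  unfolding pr_def by (simp add: algebra_simps)

lemma Z_char:
  assumes D: "closed_segment p q \<inter> U = {}"
  shows "(proj U \<alpha> \<inter> proj (closed_segment p q) \<alpha> \<noteq> {}) \<longleftrightarrow>
    (\<exists>u\<in>U. \<exists>v\<in>closed_segment p q. pr (u - v) \<alpha> = 0 \<and> 1 * rr (u - v) \<alpha> > 0) \<or>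
    (\<exists>u\<in>U. \<exists>v\<in>closed_segment p q. pr (u - v) \<alpha> = 0 \<and> (-1) * rr (u - v) \<alpha> > 0)"
proof
  assume "proj U \<alpha> \<inter> proj (closed_segment p q) \<alpha> \<noteq> {}"
  then obtain u v where uv: "u \<in> U" "v \<in> closed_segment p q" "pr u \<alpha> = pr v \<alpha>"
    unfolding proj_eq by auto
  then have "u - v \<noteq> 0" using D by auto
  then have "rr (u - v) \<alpha> \<noteq> 0" using pr_rr_zero[of "u - v" \<alpha>] uv(3) by (auto simp: pr_diff)
  then show "(\<exists>u\<in>U. \<exists>v\<in>closed_segment p q. pr (u - v) \<alpha> = 0 \<and> 1 * rr (u - v) \<alpha> > 0) \<or>
    (\<exists>u\<in>U. \<exists>v\<in>closed_segment p q. pr (u - v) \<alpha> = 0 \<and> (-1) * rr (u - v) \<alpha> > 0)"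
    using uv by (auto simp: pr_diff linorder_neq_iff)
next
  assume "(\<exists>u\<in>U. \<exists>v\<in>closed_segment p q. pr (u - v) \<alpha> = 0 \<and> 1 * rr (u - v) \<alpha> > 0) \<or>
    (\<exists>u\<in>U. \<exists>v\<in>closed_segment p q. pr (u - v) \<alpha> = 0 \<and> (-1) * rr (u - v) \<alpha> > 0)"
  then obtain u v where uv: "u \<in> U" "v \<in> closed_segment p q" "pr u \<alpha> = pr v \<alpha>"
    by (auto simp: pr_diff)
  then show "proj U \<alpha> \<inter> proj (closed_segment p q) \<alpha> \<noteq> {}"
    unfolding proj_eq by auto
qed

lemma Z_quarter:
  assumes U: "convex U" and D: "closed_segment p q \<inter> U = {}" and ab: "b - a \<le> pi/2"
  shows "{\<alpha> \<in> {a..b}. proj U \<alpha> \<inter> proj (closed_segment p q) \<alpha> \<noteq> {}} \<in> sets lebesgue"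
proof -
  let ?V = "closed_segment p q"
  have "{\<alpha> \<in> {a..b}. proj U \<alpha> \<inter> proj ?V \<alpha> \<noteq> {}} =
    {\<alpha> \<in> {a..b}. \<exists>u\<in>U. \<exists>v\<in>?V. pr (u - v) \<alpha> = 0 \<and> 1 * rr (u - v) \<alpha> > 0} \<union>
    {\<alpha> \<in> {a..b}. \<exists>u\<in>U. \<exists>v\<in>?V. pr (u - v) \<alpha> = 0 \<and> (-1) * rr (u - v) \<alpha> > 0}"
    using Z_char[OF D] by blast
  moreover have "{\<alpha> \<in> {a..b}. \<exists>u\<in>U. \<exists>v\<in>?V. pr (u - v) \<alpha> = 0 \<and> 1 * rr (u - v) \<alpha> > 0} \<in> sets borel"
    by (rule real_interval_borel_measurable, rule sign_interval[OF U convex_closed_segment _ ab]) simp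
  moreover have "{\<alpha> \<in> {a..b}. \<exists>u\<in>U. \<exists>v\<in>?V. pr (u - v) \<alpha> = 0 \<and> (-1) * rr (u - v) \<alpha> > 0} \<in> sets borel"
    by (rule real_interval_borel_measurable, rule sign_interval[OF U convex_closed_segment _ ab]) simp
  ultimately show ?thesis by auto
qed

lemma A_meas:
  assumes U: "convex U" and D: "closed_segment p q \<inter> U = {}"
  shows "{\<alpha> \<in> {0..<2*pi}. proj U \<alpha> \<inter> proj (closed_segment p q) \<alpha> \<noteq> {}} \<in> sets lebesgue"
proof -
  let ?Q = "\<lambda>a b. {\<alpha> \<in> {a..b}. proj U \<alpha> \<inter> proj (closed_segment p q) \<alpha> \<noteq> {}}"
  have "{\<alpha> \<in> {0..<2*pi}. proj U \<alpha> \<inter> proj (closed_segment p q) \<alpha> \<noteq> {}} =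
     (?Q 0 (pi/2) \<union> ?Q (pi/2) pi \<union> ?Q pi (3*pi/2) \<union> ?Q (3*pi/2) (2*pi)) \<inter> {0..<2*pi}"
  proof -
    have "{0..<2*pi} \<subseteq> {0..pi/2} \<union> {pi/2..pi} \<union> {pi..3*pi/2} \<union> {3*pi/2..2*pi}" by auto
    then show ?thesis by blast
  qed
  moreover have "?Q 0 (pi/2) \<in> sets lebesgue" by (rule Z_quarter[OF U D]) simp
  moreover have "?Q (pi/2) pi \<in> sets lebesgue" by (rule Z_quarter[OF U D]) simp
  moreover have "?Q pi (3*pi/2) \<in> sets lebesgue" by (rule Z_quarter[OF U D]) simp
  moreover have "?Q (3*pi/2) (2*pi) \<in> sets lebesgue" by (rule Z_quarter[OF U D]) simp
  moreover have "{0..<2*pi} \<in> sets lebesgue" by simp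
  ultimately show ?thesis by (metis (no_types, lifting) sets.Int sets.Un)
qed



definition clamp :: "real \<Rightarrow> real \<Rightarrow> real" where "clamp a w = max (-a) (min a w)"
definition rho :: "real \<Rightarrow> real \<Rightarrow> real" where "rho a w = cos (clamp a w) - cos a"
definition Rr :: "real \<Rightarrow> real \<Rightarrow> real" where "Rr a w = sin (clamp a w) - clamp a w * cos a"

lemma Rr_hi: "0 \<le> a \<Longrightarrow> a \<le> w \<Longrightarrow> Rr a w = sin a - a * cos a"
  unfolding Rr_def clamp_def by simp

lemma Rr_lo: "0 \<le> a \<Longrightarrow> w \<le> -a \<Longrightarrow> Rr a w = - (sin a - a * cos a)"
  unfolding Rr_def clamp_def by simp

lemma cont_Rr: "continuous_on S (\<lambda>x. Rr a (x - c))"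
  unfolding Rr_def clamp_def by (intro continuous_intros)

lemma Rr_deriv:
  assumes a: "0 \<le> a" and w: "w \<noteq> a" "w \<noteq> -a"
  shows "(Rr a has_real_derivative rho a w) (at w)"
proof (cases "\<bar>w\<bar> < a")
  case True
  have eq: "rho a w = cos w - 1 * cos a" using True by (simp add: rho_def clamp_def)
  have "((\<lambda>w. sin w - w * cos a) has_real_derivative rho a w) (at w)"
    unfolding eq by (intro derivative_eq_intros) auto
  then show ?thesis
    by (rule has_field_derivative_transform_within_open[where S="{-a<..<a}"])
       (use True in \<open>auto simp: Rr_def rho_def clamp_def\<close>)
next
  case False
  then have "w > a \<or> w < -a" using w by auto
  then show ?thesis
  proof
    assume wa: "w > a"
    have "((\<lambda>w. sin a - a * cos a) has_real_derivative rho a w) (at w)"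
      using wa a by (simp add: rho_def clamp_def)
    then show ?thesis
      by (rule has_field_derivative_transform_within_open[where S="{a<..}"])
         (use wa a in \<open>auto simp: Rr_def rho_def clamp_def\<close>)
  next
    assume wa: "w < -a"
    have "((\<lambda>w. - (sin a - a * cos a)) has_real_derivative rho a w) (at w)"
      using wa a by (simp add: rho_def clamp_def)
    then show ?thesis
      by (rule has_field_derivative_transform_within_open[where S="{..<-a}"])
         (use wa a in \<open>auto simp: Rr_def rho_def clamp_def\<close>)
  qed
qed

lemma Rr_shift_deriv:
  assumes a: "0 \<le> a" and w: "x - c \<noteq> a" "x - c \<noteq> -a"
  shows "((\<lambda>x. Rr a (x - c)) has_real_derivative rho a (x - c)) (at x)"
proof -
  have "((\<lambda>x. x - c) has_real_derivative 1) (at x)" by (intro derivative_eq_intros) auto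
  from DERIV_chain2[OF Rr_deriv[OF a w] this] show ?thesis by simp
qed

lemma rho_nonneg: "0 \<le> a \<Longrightarrow> a \<le> pi \<Longrightarrow> 0 \<le> rho a w"
proof -
  assume a: "0 \<le> a" "a \<le> pi"
  have "\<bar>clamp a w\<bar> \<le> a" using a unfolding clamp_def by auto
  then have "cos a \<le> cos \<bar>clamp a w\<bar>" using a by (subst cos_mono_le_eq) auto
  then show ?thesis unfolding rho_def by simp
qed

lemma rho_ge: "0 \<le> a \<Longrightarrow> a \<le> pi \<Longrightarrow> \<bar>w\<bar> \<le> pi \<Longrightarrow> cos w \<le> cos a + rho a w"
proof -
  assume a: "0 \<le> a" "a \<le> pi" and w: "\<bar>w\<bar> \<le> pi"
  show ?thesis
  proof (cases "\<bar>w\<bar> \<le> a")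
    case True
    then have "clamp a w = w" unfolding clamp_def by auto
    then show ?thesis unfolding rho_def by simp
  next
    case False
    then have "clamp a w = a \<or> clamp a w = -a" unfolding clamp_def by auto
    then have "cos (clamp a w) = cos a" by auto
    moreover have "cos \<bar>w\<bar> \<le> cos a" using a w False by (subst cos_mono_le_eq) auto
    ultimately show ?thesis unfolding rho_def by simp
  qed
qed

definition kap :: "real \<Rightarrow> real \<Rightarrow> real \<Rightarrow> real" where
  "kap a \<theta> x = rho a (x - (\<theta> - 2*pi)) + rho a (x - (\<theta> - pi)) + rho a (x - \<theta>) + rho a (x - (\<theta> + pi)) + rho a (x - (\<theta> + 2*pi))"

definition Fa :: "real \<Rightarrow> real \<Rightarrow> real \<Rightarrow> real" where
  "Fa a \<theta> x = Rr a (x - (\<theta> - 2*pi)) + Rr a (x - (\<theta> - pi)) + Rr a (x - \<theta>) + Rr a (x - (\<theta> + pi)) + Rr a (x - (\<theta> + 2*pi))"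

lemma kap_nonneg: "0 \<le> a \<Longrightarrow> a \<le> pi \<Longrightarrow> 0 \<le> kap a \<theta> x"
  unfolding kap_def using rho_nonneg by (simp add: add_nonneg_nonneg)

lemma kap_bound:
  assumes a: "0 \<le> a" "a \<le> pi" and th: "0 \<le> \<theta>" "\<theta> < 2*pi" and x: "0 \<le> x" "x \<le> 2*pi"
  shows "\<bar>cos (x - \<theta>)\<bar> \<le> cos a + kap a \<theta> x"
proof -
  have nn: "\<And>w. 0 \<le> rho a w" using rho_nonneg a by auto
  have key: "\<And>w. \<bar>w\<bar> \<le> pi/2 \<Longrightarrow> \<bar>cos (x - \<theta>)\<bar> = cos w \<Longrightarrow> rho a w \<le> kap a \<theta> x \<Longrightarrow> \<bar>cos (x - \<theta>)\<bar> \<le> cos a + kap a \<theta> x"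
  proof -
    fix w assume w: "\<bar>w\<bar> \<le> pi/2" "\<bar>cos (x - \<theta>)\<bar> = cos w" "rho a w \<le> kap a \<theta> x"
    have "cos w \<le> cos a + rho a w" using rho_ge[OF a, of w] w by auto
    then show "\<bar>cos (x - \<theta>)\<bar> \<le> cos a + kap a \<theta> x" using w by auto
  qed
  have cpos: "\<And>w. \<bar>w\<bar> \<le> pi/2 \<Longrightarrow> 0 \<le> cos w" by (intro cos_ge_zero) auto
  consider "x - \<theta> \<le> -3*pi/2" | "-3*pi/2 \<le> x - \<theta> \<and> x - \<theta> \<le> -pi/2" | "-pi/2 \<le> x - \<theta> \<and> x - \<theta> \<le> pi/2"
    | "pi/2 \<le> x - \<theta> \<and> x - \<theta> \<le> 3*pi/2" | "3*pi/2 \<le> x - \<theta>" by linarith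
  then show ?thesis
  proof cases
    case 1
    let ?w = "x - (\<theta> - 2*pi)"
    have w: "\<bar>?w\<bar> \<le> pi/2" using 1 x th unfolding abs_le_iff by (intro conjI; linarith)
    have "cos ?w = cos (x - \<theta>)" by (simp add: cos_diff sin_diff)
    then show ?thesis using cpos[OF w] nn w by (intro key[of ?w]) (auto simp: kap_def)
  next
    case 2
    let ?w = "x - (\<theta> - pi)"
    have w: "\<bar>?w\<bar> \<le> pi/2" using 2 unfolding abs_le_iff by (intro conjI; linarith)
    have "cos ?w = - cos (x - \<theta>)" by (simp add: cos_diff sin_diff)
    then show ?thesis using cpos[OF w] nn w by (intro key[of ?w]) (auto simp: kap_def)
  next
    case 3
    let ?w = "x - \<theta>"
    have w: "\<bar>?w\<bar> \<le> pi/2" using 3 unfolding abs_le_iff by (intro conjI; linarith)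
    then show ?thesis using cpos[OF w] nn w by (intro key[of ?w]) (auto simp: kap_def)
  next
    case 4
    let ?w = "x - (\<theta> + pi)"
    have w: "\<bar>?w\<bar> \<le> pi/2" using 4 unfolding abs_le_iff by (intro conjI; linarith)
    have "cos ?w = - cos (x - \<theta>)" by (simp add: cos_diff sin_diff)
    then show ?thesis using cpos[OF w] nn w by (intro key[of ?w]) (auto simp: kap_def)
  next
    case 5
    let ?w = "x - (\<theta> + 2*pi)"
    have w: "\<bar>?w\<bar> \<le> pi/2" using 5 x th unfolding abs_le_iff by (intro conjI; linarith)
    have "cos ?w = cos (x - \<theta>)" by (simp add: cos_diff sin_diff)
    then show ?thesis using cpos[OF w] nn w by (intro key[of ?w]) (auto simp: kap_def)
  qed
qed

lemma kap_integral:
  assumes a: "0 \<le> a" "a \<le> pi" and th: "0 \<le> \<theta>" "\<theta> < 2*pi"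
  shows "(kap a \<theta> has_integral 4 * (sin a - a * cos a)) {0..2*pi}"
proof -
  define Cs where "Cs = {\<theta> - 2*pi, \<theta> - pi, \<theta>, \<theta> + pi, \<theta> + 2*pi}"
  define S where "S = (\<lambda>c. c + a) ` Cs \<union> (\<lambda>c. c - a) ` Cs"
  have finS: "finite S" unfolding S_def Cs_def by auto
  have der: "(Fa a \<theta> has_vector_derivative kap a \<theta> x) (at x)" if x: "x \<in> {0<..<2*pi} - S" for x
  proof -
    have ne: "\<And>c. c \<in> Cs \<Longrightarrow> x - c \<noteq> a \<and> x - c \<noteq> -a"
    proof -
      fix c assume c: "c \<in> Cs"
      have "x \<noteq> c + a" "x \<noteq> c - a" using x c unfolding S_def by auto
      then show "x - c \<noteq> a \<and> x - c \<noteq> -a" by auto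
    qed
    have "(Fa a \<theta> has_real_derivative kap a \<theta> x) (at x)"
      unfolding Fa_def kap_def
      by (intro DERIV_add Rr_shift_deriv a(1); use ne in \<open>simp add: Cs_def\<close>)
    then show ?thesis by (simp add: has_real_derivative_iff_has_vector_derivative)
  qed
  have cont: "continuous_on {0..2*pi} (Fa a \<theta>)"
    unfolding Fa_def by (intro continuous_on_add cont_Rr)
  have "(kap a \<theta> has_integral (Fa a \<theta> (2*pi) - Fa a \<theta> 0)) {0..2*pi}"
    by (rule fundamental_theorem_of_calculus_interior_strong[OF finS _ der cont]) auto
  moreover have "Fa a \<theta> (2*pi) - Fa a \<theta> 0 = 4 * (sin a - a * cos a)"
  proof -
    have e1: "2*pi - (\<theta> - 2*pi) = 4*pi - \<theta>" "2*pi - (\<theta> - pi) = 3*pi - \<theta>"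
      "2*pi - (\<theta> + pi) = pi - \<theta>" "2*pi - (\<theta> + 2*pi) = - \<theta>"
      "0 - (\<theta> - 2*pi) = 2*pi - \<theta>" "0 - (\<theta> - pi) = pi - \<theta>" "0 - \<theta> = - \<theta>"
      "0 - (\<theta> + pi) = - \<theta> - pi" "0 - (\<theta> + 2*pi) = - \<theta> - 2*pi" by simp_all
    have h1: "Rr a (4*pi - \<theta>) = sin a - a * cos a" using a th by (intro Rr_hi) auto
    have h2: "Rr a (3*pi - \<theta>) = sin a - a * cos a" using a th by (intro Rr_hi) auto
    have h3: "Rr a (- \<theta> - pi) = - (sin a - a * cos a)" using a th by (intro Rr_lo) auto
    have h4: "Rr a (- \<theta> - 2*pi) = - (sin a - a * cos a)" using a th by (intro Rr_lo) auto
    show ?thesis unfolding Fa_def e1 h1 h2 h3 h4 by simp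
  qed
  ultimately show ?thesis by simp
qed


lemma polar_diff:
  obtains \<theta> where "0 \<le> \<theta>" "\<theta> < 2*pi" "\<And>\<alpha>. pr p \<alpha> - pr q \<alpha> = dist p q * cos (\<alpha> - \<theta>)"
proof -
  define d1 where "d1 = fst p - fst q"
  define d2 where "d2 = snd p - snd q"
  define L where "L = dist p q"
  have L: "L = sqrt (d1\<^sup>2 + d2\<^sup>2)"
    unfolding L_def d1_def d2_def
    by (metis dist_Pair_Pair dist_real_def power2_abs prod.collapse)
  have prd: "\<And>\<alpha>. pr p \<alpha> - pr q \<alpha> = d1 * cos \<alpha> + d2 * sin \<alpha>"
    unfolding pr_def d1_def d2_def by (simp add: algebra_simps)
  show ?thesis
  proof (cases "L = 0")
    case True
    then have "d1 = 0" "d2 = 0" using L by (auto simp: sum_power2_eq_zero_iff)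
    then show ?thesis using that[of 0] prd True unfolding L_def by auto
  next
    case False
    have "L \<ge> 0" using L by simp
    then have Lp: "L > 0" using False by linarith
    have L2: "L\<^sup>2 = d1\<^sup>2 + d2\<^sup>2" using L by simp
    have nz: "d1\<^sup>2 + d2\<^sup>2 \<noteq> 0" using Lp L2 by (metis power_not_zero less_irrefl)
    have "(d1/L)\<^sup>2 + (d2/L)\<^sup>2 = (d1\<^sup>2 + d2\<^sup>2) / L\<^sup>2"
      by (simp add: power_divide add_divide_distrib)
    also have "\<dots> = 1" using nz unfolding L2 by simp
    finally have "(d1/L)\<^sup>2 + (d2/L)\<^sup>2 = 1" .
    then obtain t where t: "0 \<le> t" "t < 2*pi" "d1/L = cos t" "d2/L = sin t"
      by (rule sincos_total_2pi)
    have "d1 = L * cos t" "d2 = L * sin t" using t Lp by (auto simp: field_simps)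
    then have "\<And>\<alpha>. pr p \<alpha> - pr q \<alpha> = L * cos (\<alpha> - t)"
      unfolding prd by (simp add: cos_diff algebra_simps)
    then show ?thesis using that t unfolding L_def by auto
  qed
qed

theorem lemma4:
  fixes U :: "(real \<times> real) set" and p q :: "real \<times> real" and \<epsilon> :: real
  assumes "convex U"
    and "closed_segment p q \<inter> U = {}"
    and "\<epsilon> \<ge> 0"
    and "measure lebesgue {\<alpha> \<in> {0..<2*pi}. proj U \<alpha> \<inter> proj (closed_segment p q) \<alpha> \<noteq> {}}
           \<le> 2*pi - 4*\<epsilon>"
  shows "(\<lambda>\<alpha>. measure lebesgue (proj (closed_segment p q) \<alpha> \<inter> proj U \<alpha>)) integrable_on {0..2*pi}
       \<and> integral {0..2*pi} (\<lambda>\<alpha>. measure lebesgue (proj (closed_segment p q) \<alpha> \<inter> proj U \<alpha>))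
           \<le> 4 * dist p q * cos \<epsilon>"
proof -
  let ?b = "closed_segment p q"
  define f where "f = (\<lambda>\<alpha>. measure lebesgue (proj ?b \<alpha> \<inter> proj U \<alpha>))"
  define Ah where "Ah = {\<alpha> \<in> {0..<2*pi}. proj U \<alpha> \<inter> proj ?b \<alpha> \<noteq> {}}"
  define L where "L = dist p q"
  have L0: "0 \<le> L" unfolding L_def by simp
  have Ahm: "Ah \<in> sets lebesgue" unfolding Ah_def by (rule A_meas[OF assms(1,2)])
  have mAh: "measure lebesgue Ah \<le> 2*pi - 4*\<epsilon>" using assms(4) unfolding Ah_def .
  have eps: "\<epsilon> \<le> pi/2" using mAh measure_nonneg[of lebesgue Ah] by linarith
  define a where "a = pi/2 - \<epsilon>"
  have a: "0 \<le> a" "a \<le> pi" unfolding a_def using eps assms(3) by auto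
  have ca: "cos a = sin \<epsilon>" "sin a = cos \<epsilon>" unfolding a_def by (simp_all add: cos_diff sin_diff)
  have s0: "0 \<le> sin \<epsilon>" using eps assms(3) by (intro sin_ge_zero) auto
  obtain \<theta> where th: "0 \<le> \<theta>" "\<theta> < 2*pi" and prd: "\<And>\<alpha>. pr p \<alpha> - pr q \<alpha> = L * cos (\<alpha> - \<theta>)"
    using polar_diff unfolding L_def by blast
  have fbnd: "f \<alpha> \<le> L * \<bar>cos (\<alpha> - \<theta>)\<bar>" for \<alpha>
    using f_bound[OF assms(1), of p q \<alpha>] L0 unfolding f_def prd by (simp add: abs_mult)
  have fnn: "0 \<le> f \<alpha>" for \<alpha> unfolding f_def by simp
  have fmeas: "f \<in> borel_measurable (lebesgue_on {0..2*pi})"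
  proof -
    have "f \<in> borel_measurable lborel" unfolding f_def by (rule f_borel[OF assms(1)])
    then have "f \<in> borel_measurable lebesgue" by (rule measurable_completion)
    then show ?thesis by (rule measurable_restrict_space1)
  qed
  have fint: "f integrable_on {0..2*pi}"
  proof (rule measurable_bounded_by_integrable_imp_integrable_real[OF fmeas])
    show "(\<lambda>_. L) integrable_on {0..2*pi}" by (intro integrable_continuous_interval continuous_on_const)
    show "\<bar>f x\<bar> \<le> L" if "x \<in> {0..2*pi}" for x
    proof -
      have "L * \<bar>cos (x - \<theta>)\<bar> \<le> L * 1" using L0 by (intro mult_left_mono) auto
      then show ?thesis using fbnd[of x] fnn[of x] by simp
    qed
  qed simp
  define B where "B = Ah \<union> {2*pi}"
  have Bsub: "B \<subseteq> {0..2*pi}" unfolding B_def Ah_def by auto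
  have Bm: "B \<in> sets lebesgue" unfolding B_def by (rule sets.Un[OF Ahm]) simp
  have Bl: "B \<in> lmeasurable"
    by (rule bounded_set_imp_lmeasurable[OF bounded_subset[OF bounded_cbox[of 0 "2*pi"]] Bm])
       (use Bsub in auto)
  have mB: "measure lebesgue B \<le> measure lebesgue Ah"
  proof -
    have "measure lebesgue B \<le> measure lebesgue Ah + measure lebesgue {2*pi}"
      unfolding B_def using Ahm by (intro measure_Un_le) auto
    then show ?thesis by simp
  qed
  have indB: "(indicator B has_integral measure lebesgue B) {0..2*pi}"
  proof -
    have "(indicator B has_integral measure lebesgue B) UNIV"
      using Bl by (simp add: lmeasurable_iff_has_integral)
    moreover have "(\<lambda>x. if x \<in> {0..2*pi} then indicator B x else 0) = (indicator B :: real \<Rightarrow> real)"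
      using Bsub by (intro ext) (auto simp: indicator_def)
    ultimately show ?thesis by (metis has_integral_restrict_UNIV)
  qed
  define g where "g = (\<lambda>\<alpha>. sin \<epsilon> * L * indicator B \<alpha> + L * kap a \<theta> \<alpha>)"
  have gint: "(g has_integral (sin \<epsilon> * L * measure lebesgue B + L * (4 * (sin a - a * cos a)))) {0..2*pi}"
    unfolding g_def
    by (intro has_integral_add has_integral_mult_right kap_integral[OF a th] indB)
  have fg: "f x \<le> g x" if x: "x \<in> {0..2*pi}" for x
  proof (cases "x \<in> B")
    case True
    have "L * \<bar>cos (x - \<theta>)\<bar> \<le> L * (cos a + kap a \<theta> x)"
      using kap_bound[OF a th] x L0 by (intro mult_left_mono) auto
    then show ?thesis using fbnd[of x] True unfolding g_def ca by (simp add: algebra_simps)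
  next
    case False
    then have "x \<notin> Ah" "x \<noteq> 2*pi" unfolding B_def by auto
    then have "proj ?b x \<inter> proj U x = {}" using x unfolding Ah_def by auto
    then have "f x = 0" unfolding f_def by simp
    then show ?thesis using False kap_nonneg[OF a] L0 unfolding g_def by simp
  qed
  have "integral {0..2*pi} f \<le> sin \<epsilon> * L * measure lebesgue B + L * (4 * (sin a - a * cos a))"
    by (rule has_integral_le[OF integrable_integral[OF fint] gint fg])
  also have "\<dots> \<le> sin \<epsilon> * L * (2*pi - 4*\<epsilon>) + L * (4 * (sin a - a * cos a))"
    using mB mAh s0 L0 by (intro add_right_mono mult_left_mono) auto
  also have "\<dots> = 4 * L * cos \<epsilon>"
    unfolding ca by (simp add: a_def algebra_simps)
  finally show ?thesis using fint unfolding f_def L_def by simp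
qed

end
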